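(* In the standing setting described in the context, there exist constants $B_0,C_0$ such that for all $j\in\mathbb{N}$ and all $\vec x\in\mathbb{C}^d$, $$|m_0((A^\tau)^{-j}\vec x)|\le\Big(1+C_0\min\big(1,\tfrac{|\vec x|}{\beta^j}\big)\Big)\exp\Big(\tfrac{B_0|\mathfrak{Im}(\vec x)|}{\beta^j}\Big).$$
   Context: $\vec x\circ\vec y=\sum_j x_j\overline{y_j}$ for $\vec x,\vec y\in\mathbb{C}^d$; $|\cdot|$ is the Euclidean norm; $\mathfrak{Im}(\vec x)\in\mathbb{R}^d$ is the imaginary part of $\vec x$. $A^\tau$ is the transpose; expansive means all eigenvalues have modulus $>1$. $\beta=\|(A^\tau)^{-1}\|^{-1}$, where $\|\cdot\|$ is the operator norm on the Euclidean space $\mathbb{C}^d$. Standing setting: $A$ is a $d\times d$ expansive integral matrix with $|\det A|=2$ such that $A\mathbb{Z}^d=A^\tau\mathbb{Z}^d$, and $\vec\ell_A,\vec q_A\in\mathbb{Z}^d$ satisfy: $\mathbb{Z}^d=(\vec\ell_A+A\mathbb{Z}^d)\dot\cup A\mathbb{Z}^d$; $\vec q_A\circ A\mathbb{Z}^d\subseteq2\mathbb{Z}$, $\vec q_A\circ(\vec\ell_A+A\mathbb{Z}^d)\subseteq2\mathbb{Z}+1$; for $\vec m\in A\mathbb{Z}^d$, $\vec n\in\mathbb{Z}^d$: $\mathbb{Z}^d=(\vec n-A\mathbb{Z}^d)\dot\cup(\vec\ell_A-\vec m-\vec n+A\mathbb{Z}^d)$; for $\vec m\in\vec\ell_A+A\mathbb{Z}^d$,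 $\vec n\in\mathbb{Z}^d$: $\vec n-A\mathbb{Z}^d=\vec\ell_A-\vec m-\vec n+A\mathbb{Z}^d$. The complex numbers $\{h_{\vec n}\}$ satisfy $\sum_{\vec n}h_{\vec n}\overline{h_{\vec n+\vec k}}=\delta_{\vec0,\vec k}$ ($\vec k\in A\mathbb{Z}^d$), $\sum_{\vec n}h_{\vec n}=\sqrt2$, and vanish outside $\Lambda_0=\mathbb{Z}^d\cap[-N_0,N_0]^d$. $m_0(\vec t)=\frac1{\sqrt2}\sum_{\vec n\in\Lambda_0}h_{\vec n}e^{-i\vec n\circ\vec t}$ for $\vec t\in\mathbb{C}^d$. *)

theory Defs
  imports "HOL-Analysis.Analysis"
begin

text \<open>Complex dot product x \<circ> y = sum_j x_j * conj(y_j) on C^d.\<close>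
definition cdot :: "complex^'n::finite \<Rightarrow> complex^'n \<Rightarrow> complex" where
  "cdot x y = (\<Sum>i\<in>UNIV. x $ i * cnj (y $ i))"

text \<open>Dot product on Z^d (conjugation is trivial there).\<close>
definition idot :: "int^'n::finite \<Rightarrow> int^'n \<Rightarrow> int" where
  "idot x y = (\<Sum>i\<in>UNIV. x $ i * y $ i)"

definition cvec :: "int^'n::finite \<Rightarrow> complex^'n" where
  "cvec v = (\<chi> i. of_int (v $ i))"

definition cmat :: "int^'n::finite^'m::finite \<Rightarrow> complex^'n^'m" where
  "cmat M = map_matrix of_int M"

text \<open>Imaginary part of a vector in C^d, a vector in R^d.\<close>
definition vIm :: "complex^'n::finite \<Rightarrow> real^'n" where
  "vIm x = (\<chi> i. Im (x $ i))"

text \<open>The lattice A Z^d.\<close>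
definition lat :: "int^'n::finite^'n \<Rightarrow> (int^'n) set" where
  "lat A = range (\<lambda>m. A *v m)"

text \<open>Expansive: every (complex) eigenvalue has modulus > 1.\<close>
definition expansive :: "int^'n::finite^'n \<Rightarrow> bool" where
  "expansive A \<longleftrightarrow> (\<forall>c v. v \<noteq> 0 \<and> cmat A *v v = c *s v \<longrightarrow> 1 < cmod c)"

text \<open>Lambda_0 = Z^d \<inter> [-N0,N0]^d.\<close>
definition Lambda0 :: "nat \<Rightarrow> (int^'n::finite) set" where
  "Lambda0 N0 = {n. \<forall>i. \<bar>n $ i\<bar> \<le> int N0}"

definition m0 :: "(int^'n::finite \<Rightarrow> complex) \<Rightarrow> nat \<Rightarrow> complex^'n \<Rightarrow> complex" where
  "m0 h N0 t = (1 / sqrt 2) * (\<Sum>n\<in>Lambda0 N0. h n * exp (- \<i> * cdot (cvec n) t))"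

text \<open>beta = || (A^T)^{-1} ||^{-1}, operator norm on Euclidean C^d.\<close>
definition betaA :: "int^'n::finite^'n \<Rightarrow> real" where
  "betaA A = inverse (onorm (\<lambda>x::complex^'n. matrix_inv (cmat (transpose A)) *v x))"

end

theory Submission
  imports Defs
begin


lemma det_cmat: "det (cmat (B::int^'n::finite^'n)) = of_int (det B)"
  by (simp add: det_def cmat_def of_int_sum of_int_prod)

lemma inv_real:
  fixes C :: "complex^'n::finite^'n"
  assumes inv: "invertible C" and re: "\<forall>i k. Im (C$i$k) = 0"
  shows "\<forall>i k. Im (matrix_inv C $i$k) = 0"
proof -
  define M where "M = matrix_inv C"
  have MC: "C ** M = mat 1 \<and> M ** C = mat 1"
    unfolding M_def matrix_inv_def using inv unfolding invertible_def by (rule someI_ex)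
  define Mc where "Mc = (\<chi> i k. cnj (M$i$k))"
  have cC: "cnj (C$i$k) = C$i$k" for i k using re by (simp add: complex_eq_iff)
  have "C ** Mc = mat 1"
  proof -
    have "(C ** Mc) $ i $ k = cnj ((C ** M) $ i $ k)" for i k
      by (simp add: matrix_matrix_mult_def Mc_def cC)
    then show ?thesis using MC by (simp add: vec_eq_iff mat_def)
  qed
  then have "Mc = M" using MC by (metis matrix_mul_assoc matrix_mul_lid matrix_mul_rid)
  then have "cnj (M$i$k) = M$i$k" for i k by (metis Mc_def vec_lambda_beta)
  then have "Im (M$i$k) = 0" for i k
  proof -
    have "Im (cnj (M$i$k)) = - Im (M$i$k)" by simp
    then show ?thesis using \<open>\<And>i k. cnj (M$i$k) = M$i$k\<close>[of i k] by simp
  qed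
  then show ?thesis unfolding M_def by blast
qed

definition cR :: "real^'n::finite \<Rightarrow> complex^'n" where
  "cR u = (\<chi> i. complex_of_real (u$i))"

lemma norm_cR: "norm (cR u) = norm u"
  by (simp add: cR_def norm_vec_def)

lemma vIm_mult:
  fixes M :: "complex^'n::finite^'n"
  assumes "\<forall>i k. Im (M$i$k) = 0"
  shows "cR (vIm (M *v v)) = M *v cR (vIm v)"
proof -
  have e: "M$i$k = complex_of_real (Re (M$i$k))" for i k using assms by (simp add: complex_eq_iff)
  show ?thesis
    unfolding vec_eq_iff cR_def vIm_def matrix_vector_mult_def
    apply (simp add: Im_sum of_real_sum)
    apply (intro allI sum.cong refl)
    using assms by (simp add: complex_eq_iff)
qed

lemma vIm_iter:
  fixes M :: "complex^'n::finite^'n"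
  assumes "\<forall>i k. Im (M$i$k) = 0"
  shows "norm (vIm (((\<lambda>v. M *v v) ^^ j) x)) \<le> onorm (\<lambda>v. M *v v) ^ j * norm (vIm x)"
proof (induction j)
  case 0 then show ?case by simp
next
  case (Suc j)
  let ?y = "((\<lambda>v. M *v v) ^^ j) x"
  have "norm (vIm (M *v ?y)) = norm (M *v cR (vIm ?y))"
    by (metis norm_cR vIm_mult[OF assms])
  also have "\<dots> \<le> onorm (\<lambda>v. M *v v) * norm (cR (vIm ?y))"
    by (rule onorm[OF matrix_vector_mul_bounded_linear])
  also have "\<dots> \<le> onorm (\<lambda>v. M *v v) * (onorm (\<lambda>v. M *v v) ^ j * norm (vIm x))"
    unfolding norm_cR by (rule mult_left_mono[OF Suc.IH onorm_pos_le[OF matrix_vector_mul_bounded_linear]])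
  finally show ?case by (simp add: mult.assoc)
qed

lemma norm_iter:
  fixes M :: "complex^'n::finite^'n"
  shows "norm (((\<lambda>v. M *v v) ^^ j) x) \<le> onorm (\<lambda>v. M *v v) ^ j * norm x"
proof (induction j)
  case 0 then show ?case by simp
next
  case (Suc j)
  let ?y = "((\<lambda>v. M *v v) ^^ j) x"
  have "norm (M *v ?y) \<le> onorm (\<lambda>v. M *v v) * norm ?y"
    by (rule onorm[OF matrix_vector_mul_bounded_linear])
  also have "\<dots> \<le> onorm (\<lambda>v. M *v v) * (onorm (\<lambda>v. M *v v) ^ j * norm x)"
    using Suc by (simp add: mult_left_mono onorm_pos_le[OF matrix_vector_mul_bounded_linear])
  finally show ?case by (simp add: mult.assoc)
qed



lemma cdot_bound:
  assumes "n \<in> Lambda0 N0"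
  shows "cmod (cdot (cvec n) (t::complex^'n::finite)) \<le> real CARD('n) * N0 * norm t"
proof -
  have "cmod (cdot (cvec n) t) \<le> (\<Sum>i\<in>UNIV. cmod (of_int (n$i) * cnj (t$i)))"
    unfolding cdot_def cvec_def by (simp add: norm_sum)
  also have "\<dots> \<le> (\<Sum>i\<in>(UNIV::'n set). real N0 * norm t)"
  proof (rule sum_mono)
    fix i
    have a: "\<bar>real_of_int (n$i)\<bar> \<le> real N0" 
    proof -
      have "\<bar>n$i\<bar> \<le> int N0" using assms unfolding Lambda0_def by blast
      then show ?thesis by (metis of_int_abs of_int_le_iff of_int_of_nat_eq)
    qed
    have b: "cmod (t$i) \<le> norm t" by (rule Finite_Cartesian_Product.norm_nth_le)
    show "cmod (of_int (n$i) * cnj (t$i)) \<le> real N0 * norm t"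
      by (simp add: norm_mult) (rule mult_mono[OF a b]; simp)
  qed
  finally show ?thesis by simp
qed

lemma re_bound:
  assumes "n \<in> Lambda0 N0"
  shows "Re (- \<i> * cdot (cvec n) (t::complex^'n::finite)) \<le> real CARD('n) * N0 * norm (vIm t)"
proof -
  have "Re (- \<i> * cdot (cvec n) t) = (\<Sum>i\<in>UNIV. - (of_int (n$i) * Im (t$i)))"
    unfolding cdot_def cvec_def by (simp add: Im_sum)
  also have "\<dots> \<le> (\<Sum>i\<in>(UNIV::'n set). real N0 * norm (vIm t))"
  proof (rule sum_mono)
    fix i
    have a: "\<bar>real_of_int (n$i)\<bar> \<le> real N0" 
    proof -
      have "\<bar>n$i\<bar> \<le> int N0" using assms unfolding Lambda0_def by blast
      then show ?thesis by (metis of_int_abs of_int_le_iff of_int_of_nat_eq)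
    qed
    have b: "\<bar>Im (t$i)\<bar> \<le> norm (vIm t)"
      using component_le_norm_cart[of "vIm t" i] by (simp add: vIm_def)
    have "- (of_int (n$i) * Im (t$i)) \<le> \<bar>real_of_int (n$i)\<bar> * \<bar>Im (t$i)\<bar>"
      by (metis abs_ge_minus_self abs_mult)
    also have "\<dots> \<le> real N0 * norm (vIm t)" by (rule mult_mono[OF a b]; simp)
    finally show "- (of_int (n$i) * Im (t$i)) \<le> real N0 * norm (vIm t)" .
  qed
  finally show ?thesis by simp
qed



lemma exp_m1: "cmod (exp z - 1) \<le> exp (cmod z) * cmod z"
  using Taylor_exp_field[of z 0] by simp

lemma m0_boundA:
  fixes t :: "complex^'n::finite" and N0 :: nat
  defines "L \<equiv> real CARD('n) * N0"
  shows "cmod (m0 h N0 t) \<le> (1 / sqrt 2 * (\<Sum>n\<in>Lambda0 N0. cmod (h n))) * exp (L * norm (vIm t))"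
proof -
  have "cmod (\<Sum>n\<in>Lambda0 N0. h n * exp (- \<i> * cdot (cvec n) t))
     \<le> (\<Sum>n\<in>Lambda0 N0. cmod (h n * exp (- \<i> * cdot (cvec n) t)))" by (rule norm_sum)
  also have "\<dots> \<le> (\<Sum>n\<in>Lambda0 N0. cmod (h n) * exp (L * norm (vIm t)))"
  proof (rule sum_mono)
    fix n :: "int^'n" assume "n \<in> Lambda0 N0"
    then have "Re (- \<i> * cdot (cvec n) t) \<le> L * norm (vIm t)" unfolding L_def by (rule re_bound)
    then show "cmod (h n * exp (- \<i> * cdot (cvec n) t)) \<le> cmod (h n) * exp (L * norm (vIm t))"
      by (simp add: norm_mult norm_exp_eq_Re mult_left_mono del: mult_minus_left)
  qed
  also have "\<dots> = (\<Sum>n\<in>Lambda0 N0. cmod (h n)) * exp (L * norm (vIm t))" by (simp add: sum_distrib_right)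
  finally show ?thesis unfolding m0_def by (simp add: norm_mult norm_divide divide_right_mono)
qed

lemma m0_boundB:
  fixes t :: "complex^'n::finite" and N0 :: nat
  defines "L \<equiv> real CARD('n) * N0"
  assumes sumh: "(\<Sum>n\<in>Lambda0 N0. h n) = complex_of_real (sqrt 2)"
    and t1: "norm t \<le> 1"
  shows "cmod (m0 h N0 t) \<le> 1 + (1 / sqrt 2 * (\<Sum>n\<in>Lambda0 N0. cmod (h n))) * exp L * L * norm t"
proof -
  let ?e = "\<lambda>n. exp (- \<i> * cdot (cvec n) t)"
  have "m0 h N0 t = (1 / sqrt 2) * ((\<Sum>n\<in>Lambda0 N0. h n) + (\<Sum>n\<in>Lambda0 N0. h n * (?e n - 1)))"
    unfolding m0_def by (simp add: sum.distrib[symmetric] algebra_simps)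
  also have "\<dots> = 1 + (1 / sqrt 2) * (\<Sum>n\<in>Lambda0 N0. h n * (?e n - 1))"
    using sumh by (simp add: algebra_simps)
  finally have eq: "m0 h N0 t = 1 + (1 / sqrt 2) * (\<Sum>n\<in>Lambda0 N0. h n * (?e n - 1))" .
  have "cmod (\<Sum>n\<in>Lambda0 N0. h n * (?e n - 1)) \<le> (\<Sum>n\<in>Lambda0 N0. cmod (h n * (?e n - 1)))"
    by (rule norm_sum)
  also have "\<dots> \<le> (\<Sum>n\<in>Lambda0 N0. cmod (h n) * (exp L * L * norm t))"
  proof (rule sum_mono)
    fix n :: "int^'n" assume n: "n \<in> Lambda0 N0"
    have c: "cmod (- \<i> * cdot (cvec n) t) \<le> L * norm t"
      using cdot_bound[OF n, of t] unfolding L_def by (simp add: norm_mult)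
    have L0: "0 \<le> L" unfolding L_def by simp
    have cL: "cmod (- \<i> * cdot (cvec n) t) \<le> L"
      using c t1 L0 by (meson mult_left_le order_trans)
    have "cmod (?e n - 1) \<le> exp (cmod (- \<i> * cdot (cvec n) t)) * cmod (- \<i> * cdot (cvec n) t)"
      by (rule exp_m1)
    also have "\<dots> \<le> exp L * (L * norm t)"
      by (rule mult_mono[OF _ c]) (use cL in auto)
    finally show "cmod (h n * (?e n - 1)) \<le> cmod (h n) * (exp L * L * norm t)"
      by (simp add: norm_mult mult_left_mono mult.assoc)
  qed
  also have "\<dots> = (\<Sum>n\<in>Lambda0 N0. cmod (h n)) * (exp L * L * norm t)" by (simp add: sum_distrib_right)
  finally have s: "cmod (\<Sum>n\<in>Lambda0 N0. h n * (?e n - 1)) \<le> (\<Sum>n\<in>Lambda0 N0. cmod (h n)) * (exp L * L * norm t)" .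
  have "cmod (m0 h N0 t) \<le> 1 + cmod ((1 / sqrt 2) * (\<Sum>n\<in>Lambda0 N0. h n * (?e n - 1)))"
    unfolding eq using norm_triangle_ineq[of 1 "(1 / sqrt 2) * (\<Sum>n\<in>Lambda0 N0. h n * (?e n - 1))"] by simp
  also have "\<dots> \<le> 1 + (1 / sqrt 2) * ((\<Sum>n\<in>Lambda0 N0. cmod (h n)) * (exp L * L * norm t))"
    using s by (simp add: norm_mult norm_divide divide_right_mono)
  finally show ?thesis by (simp add: mult.assoc)
qed



theorem lemma8p4:
  fixes A :: "int^'n::finite^'n" and l q :: "int^'n"
    and h :: "int^'n \<Rightarrow> complex" and N0 :: nat
  assumes exp: "expansive A"
    and det: "\<bar>det A\<bar> = 2"
    and latT: "lat A = lat (transpose A)"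
    and split: "UNIV = ((+) l ` lat A) \<union> lat A" "((+) l ` lat A) \<inter> lat A = {}"
    and q_even: "\<forall>m\<in>lat A. even (idot q m)"
    and q_odd: "\<forall>m\<in>(+) l ` lat A. odd (idot q m)"
    and cond1: "\<forall>m\<in>lat A. \<forall>n.
        UNIV = ((\<lambda>k. n - k) ` lat A) \<union> ((\<lambda>k. l - m - n + k) ` lat A)
      \<and> ((\<lambda>k. n - k) ` lat A) \<inter> ((\<lambda>k. l - m - n + k) ` lat A) = {}"
    and cond2: "\<forall>m\<in>(+) l ` lat A. \<forall>n.
        (\<lambda>k. n - k) ` lat A = (\<lambda>k. l - m - n + k) ` lat A"
    and orth: "\<forall>k\<in>lat A. (\<Sum>n\<in>Lambda0 N0. h n * cnj (h (n + k))) = (if k = 0 then 1 else 0)"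
    and sumh: "(\<Sum>n\<in>Lambda0 N0. h n) = complex_of_real (sqrt 2)"
    and supp: "\<forall>n. n \<notin> Lambda0 N0 \<longrightarrow> h n = 0"
  shows "\<exists>B0 C0 :: real. \<forall>(j::nat) (x::complex^'n).
    cmod (m0 h N0 (((\<lambda>v. matrix_inv (cmat (transpose A)) *v v) ^^ j) x))
      \<le> (1 + C0 * min 1 (norm x / betaA A ^ j)) * exp (B0 * norm (vIm x) / betaA A ^ j)"
proof -
  define M where "M = matrix_inv (cmat (transpose A))"
  define \<rho> where "\<rho> = onorm (\<lambda>v. M *v v)"
  define L where "L = real CARD('n) * N0"
  define K where "K = 1 / sqrt 2 * (\<Sum>n\<in>Lambda0 N0. cmod (h n))"
  define C0 where "C0 = K + K * exp L * L"
  have inv: "invertible (cmat (transpose A))"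
    unfolding invertible_det_nz det_cmat det_transpose using det by auto
  have reC: "\<forall>i k. Im (cmat (transpose A) $i$k) = 0" by (simp add: cmat_def)
  have real: "\<forall>i k. Im (M$i$k) = 0" unfolding M_def by (rule inv_real[OF inv reC])
  have beta: "betaA A = inverse \<rho>" by (simp add: betaA_def M_def \<rho>_def)
  have dv: "y / betaA A ^ j = y * \<rho> ^ j" for y :: real and j
    by (simp add: beta power_inverse divide_inverse)
  have K0: "0 \<le> K" unfolding K_def by (simp add: sum_nonneg)
  have L0: "0 \<le> L" unfolding L_def by simp
  have \<rho>0: "0 \<le> \<rho>" unfolding \<rho>_def by (rule onorm_pos_le[OF matrix_vector_mul_bounded_linear])
  have C00: "0 \<le> C0" unfolding C0_def using K0 L0 by simp
  show ?thesis
  proof (intro exI allI)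
    fix j :: nat and x :: "complex^'n"
    define t where "t = ((\<lambda>v. M *v v) ^^ j) x"
    have nt: "norm t \<le> \<rho>^j * norm x" unfolding t_def \<rho>_def by (rule norm_iter)
    have nIm: "norm (vIm t) \<le> \<rho>^j * norm (vIm x)" unfolding t_def \<rho>_def by (rule vIm_iter[OF real])
    have E: "exp (L * norm (vIm t)) \<le> exp (L * norm (vIm x) / betaA A ^ j)"
      unfolding dv using nIm L0 by (simp add: mult_left_mono mult.commute mult.left_commute)
    have goal: "cmod (m0 h N0 t) \<le> (1 + C0 * min 1 (norm x / betaA A ^ j)) * exp (L * norm (vIm x) / betaA A ^ j)"
    proof (cases "1 \<le> norm x * \<rho>^j")
      case True
      have "cmod (m0 h N0 t) \<le> K * exp (L * norm (vIm t))" unfolding K_def L_def by (rule m0_boundA)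
      also have "\<dots> \<le> K * exp (L * norm (vIm x) / betaA A ^ j)" using E K0 by (rule mult_left_mono)
      also have "\<dots> \<le> (1 + C0 * min 1 (norm x / betaA A ^ j)) * exp (L * norm (vIm x) / betaA A ^ j)"
        using True K0 L0 unfolding dv C0_def by (intro mult_right_mono) auto
      finally show ?thesis .
    next
      case False
      have t1: "norm t \<le> 1" using nt False by (simp add: mult.commute)
      have "cmod (m0 h N0 t) \<le> 1 + K * exp L * L * norm t" unfolding K_def L_def by (rule m0_boundB[OF sumh t1])
      also have "\<dots> \<le> 1 + C0 * (norm x * \<rho>^j)"
      proof -
        have "K * exp L * L * norm t \<le> K * exp L * L * (\<rho>^j * norm x)"
          using nt K0 L0 by (intro mult_left_mono) auto
        also have "\<dots> \<le> C0 * (norm x * \<rho>^j)"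
        proof -
          have P: "0 \<le> \<rho>^j * norm x" using \<rho>0 by simp
          have "0 \<le> K * (\<rho>^j * norm x)" using K0 P by simp
          then show ?thesis unfolding C0_def by (simp add: distrib_right mult.commute[of "norm x"])
        qed
        finally show ?thesis by simp
      qed
      also have "\<dots> = (1 + C0 * min 1 (norm x / betaA A ^ j)) * 1"
        using False unfolding dv by simp
      also have "\<dots> \<le> (1 + C0 * min 1 (norm x / betaA A ^ j)) * exp (L * norm (vIm x) / betaA A ^ j)"
        using False C00 \<rho>0 L0 unfolding dv by (intro mult_left_mono) auto
      finally show ?thesis .
    qed
    then show "cmod (m0 h N0 (((\<lambda>v. matrix_inv (cmat (transpose A)) *v v) ^^ j) x))
      \<le> (1 + C0 * min 1 (norm x / betaA A ^ j)) * exp (L * norm (vIm x) / betaA A ^ j)"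
      unfolding t_def M_def .
  qed
qed

end
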